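(* As $n\to\infty$: (i) for fixed $j\ge1$, $\mathbb{E}[D_{n,j}]\sim \frac{\Gamma(j-1/2)}{\Gamma(j)}\,n^{1/2}$ and $\operatorname{Var}[D_{n,j}]\sim\left(\frac{4}{2j-1}-\frac{\Gamma^2(j-1/2)}{\Gamma^2(j)}\right)n$; (ii) if $j=j(n)\le n$ with $j\to\infty$, then $\mathbb{E}[D_{n,j}]\sim (n/j)^{1/2}$; (iii) if $j=j(n)\to\infty$ with $j=o(n)$, then $\operatorname{Var}[D_{n,j}]\sim n/j$; (iv) if $j=j(n)$ with $j/n\to\theta\in(0,1)$, then $\operatorname{Var}[D_{n,j}]\to 1/\theta-1/\sqrt{\theta}$.
   Context: A plane-oriented recursive tree (PORT) is the random sequence of trees $(T_n)_{n\ge1}$ defined as follows. $T_1$ is a single node labeled $1$ (the root). For $n\ge2$, $T_n$ is obtained from $T_{n-1}$ by adding a node labeled $n$ and an edge joining it to a node $i\in\{1,\dots,n-1\}$ of $T_{n-1}$, where, conditionally on $T_1,\dots,T_{n-1}$, node $i$ is chosen with probability $(c_{n-1,i}+1)/(2n-3)$, with $c_{n-1,i}$ the number of children of $i$ in $T_{n-1}$. $D_{n,j}$ denotes the degree of the node labeled $j$ in $T_n$. $a_n\sim b_n$ means $a_n/b_n\to1$. *)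

theory Defs
  imports "HOL-Probability.Probability" "HOL-Library.Landau_Symbols"
begin

text \<open>A plane-oriented recursive tree T_n is encoded by the list of parents
  of the nodes 2, 3, ..., n (the k-th entry, 0-based, is the parent of node k+2).
  Attaching node n+1 to node i of T_n (nodes 1..n) with probability
  (c_{n,i}+1)/(2n-1) is the uniform choice from the multiset containing every
  node of T_n once plus one copy of i per child of i, i.e. mset ps + mset [1..<n+1].\<close>

fun port :: "nat \<Rightarrow> nat list pmf" where
  "port 0 = return_pmf []"
| "port (Suc n) =
     (if n = 0 then return_pmf []
      else bind_pmf (port n)
             (\<lambda>ps. map_pmf (\<lambda>i. ps @ [i])
                     (pmf_of_multiset (mset ps + mset [1..<Suc n]))))"

definition children :: "nat list \<Rightarrow> nat \<Rightarrow> nat" where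
  "children ps i = count (mset ps) i"

text \<open>Degree of node j (graph degree: children plus the edge to the parent,
  which exists for every non-root node j \<ge> 2).\<close>
definition deg :: "nat list \<Rightarrow> nat \<Rightarrow> nat" where
  "deg ps j = children ps j + (if j \<ge> 2 then 1 else 0)"

definition ED :: "nat \<Rightarrow> nat \<Rightarrow> real" where
  "ED n j = measure_pmf.expectation (port n) (\<lambda>ps. real (deg ps j))"

definition VarD :: "nat \<Rightarrow> nat \<Rightarrow> real" where
  "VarD n j = measure_pmf.variance (port n) (\<lambda>ps. real (deg ps j))"

end

theory Submission
  imports Defs
begin

lemma inv_nat_lim: "(\<lambda>n. inverse (real n)) \<longlonglongrightarrow> 0"
  by (rule tendsto_inverse_0_at_top[OF filterlim_real_sequentially])

lemma inv_sqrt_lim: "(\<lambda>n. inverse (sqrt (real n))) \<longlonglongrightarrow> 0"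
  by (rule tendsto_inverse_0_at_top[OF filterlim_compose[OF sqrt_at_top filterlim_real_sequentially]])

lemma lim_a: "(\<lambda>n. (real n - 1/2) / real n) \<longlonglongrightarrow> 1"
proof -
  have L: "(\<lambda>n. 1 - 1/2 * inverse (real n)) \<longlonglongrightarrow> 1 - 1/2 * 0"
    by (rule tendsto_diff[OF tendsto_const tendsto_mult[OF tendsto_const inv_nat_lim]])
  show ?thesis
  proof (rule Lim_transform_eventually[OF L[simplified]], rule eventually_sequentiallyI[of 1])
    fix n :: nat assume "1 \<le> n"
    then have "real n > 0" by simp
    then show "1 - inverse (real n) / 2 = (real n - 1/2) / real n" by (simp add: field_simps)
  qed
qed

lemma lim_b: "(\<lambda>n. real n / (real n - 1)) \<longlonglongrightarrow> 1"
proof -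
  have L: "(\<lambda>n. inverse (1 - inverse (real n))) \<longlonglongrightarrow> inverse (1 - 0)"
    by (rule tendsto_inverse[OF tendsto_diff[OF tendsto_const inv_nat_lim]]) simp
  show ?thesis
  proof (rule Lim_transform_eventually[OF L[simplified]], rule eventually_sequentiallyI[of 2])
    fix n :: nat assume "2 \<le> n"
    then have "real n > 1" by simp
    then show "inverse (1 - inverse (real n)) = real n / (real n - 1)" by (simp add: field_simps)
  qed
qed





lemma port_support:
  "n \<ge> 1 \<Longrightarrow> ps \<in> set_pmf (port n) \<Longrightarrow> length ps = n - 1 \<and> set ps \<subseteq> {1..<n}"
proof (induction n arbitrary: ps)
  case 0 then show ?case by simp
next
  case (Suc n)
  show ?case
  proof (cases "n = 0")
    case True then show ?thesis using Suc.prems by simp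
  next
    case False
    have ne: "mset qs + mset [1..<Suc n] \<noteq> {#}" for qs :: "nat list" using False by simp
    from Suc.prems False obtain qs i where qs: "qs \<in> set_pmf (port n)" and ps: "ps = qs @ [i]"
      and i: "i \<in> set_mset (mset qs + mset [1..<Suc n])"
      by (auto simp: set_pmf_of_multiset[OF ne])
    from Suc.IH[OF _ qs] False have "length qs = n - 1" "set qs \<subseteq> {1..<n}" by auto
    then show ?thesis using ps i False by auto
  qed
qed

lemma port_finite: "finite (set_pmf (port n))"
proof -
  have "set_pmf (port n) \<subseteq> {ps. set ps \<subseteq> {0..<n} \<and> length ps = n - 1}"
  proof
    fix ps assume "ps \<in> set_pmf (port n)"
    then show "ps \<in> {ps. set ps \<subseteq> {0..<n} \<and> length ps = n - 1}"
      using port_support[of n ps] by (cases "n = 0") auto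
  qed
  moreover have "finite {ps. set ps \<subseteq> {0..<n} \<and> length ps = n - 1}"
    by (rule finite_lists_length_eq) simp
  ultimately show ?thesis by (rule finite_subset)
qed

lemma exp_bind:
  fixes p :: "'a pmf" and f :: "'a \<Rightarrow> 'b pmf" and h :: "'b \<Rightarrow> real"
  assumes "finite (set_pmf p)" "\<And>x. x \<in> set_pmf p \<Longrightarrow> finite (set_pmf (f x))"
  shows "measure_pmf.expectation (p \<bind> f) h = measure_pmf.expectation p (\<lambda>x. measure_pmf.expectation (f x) h)"
  using pmf_expectation_bind[OF assms(1) assms(2) order_refl, where h=h]
    integral_measure_pmf[OF assms(1), of p "\<lambda>x. measure_pmf.expectation (f x) h"]
  by simp

lemma step_lemma:
  fixes f :: "nat \<Rightarrow> real"
  assumes n: "n \<ge> 1" and j: "1 \<le> j" "j \<le> n"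
  shows "measure_pmf.expectation (port (Suc n)) (\<lambda>ps. f (count (mset ps) j)) =
         measure_pmf.expectation (port n) (\<lambda>ps. f (count (mset ps) j) +
            (f (count (mset ps) j + 1) - f (count (mset ps) j)) * (real (count (mset ps) j) + 1) / (2 * real n - 1))"
proof -
  have ne: "mset qs + mset [1..<Suc n] \<noteq> {#}" for qs :: "nat list" using n by simp
  have "port (Suc n) = port n \<bind> (\<lambda>ps. map_pmf (\<lambda>i. ps @ [i]) (pmf_of_multiset (mset ps + mset [1..<Suc n])))"
    using n by simp
  then have "measure_pmf.expectation (port (Suc n)) (\<lambda>ps. f (count (mset ps) j)) =
     measure_pmf.expectation (port n) (\<lambda>ps. measure_pmf.expectation (map_pmf (\<lambda>i. ps @ [i]) (pmf_of_multiset (mset ps + mset [1..<Suc n])))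
        (\<lambda>ps. f (count (mset ps) j)))"
    by (simp only:) (rule exp_bind, use n in \<open>auto simp: port_finite set_pmf_of_multiset[OF ne]\<close>)
  also have "\<dots> = 
     measure_pmf.expectation (port n) (\<lambda>ps. measure_pmf.expectation (pmf_of_multiset (mset ps + mset [1..<Suc n]))
        (\<lambda>i. f (count (mset (ps @ [i])) j)))"
    by (simp only: integral_map_pmf)
  also have "\<dots> = measure_pmf.expectation (port n) (\<lambda>ps. f (count (mset ps) j) +
            (f (count (mset ps) j + 1) - f (count (mset ps) j)) * (real (count (mset ps) j) + 1) / (2 * real n - 1))"
  proof (rule integral_cong_AE)
    show "AE ps in measure_pmf (port n). measure_pmf.expectation (pmf_of_multiset (mset ps + mset [1..<Suc n]))
        (\<lambda>i. f (count (mset (ps @ [i])) j)) = f (count (mset ps) j) +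
            (f (count (mset ps) j + 1) - f (count (mset ps) j)) * (real (count (mset ps) j) + 1) / (2 * real n - 1)"
    proof (rule AE_pmfI)
      fix ps assume ps: "ps \<in> set_pmf (port n)"
      define c where "c = count (mset ps) j"
      define M where "M = mset ps + mset [1..<Suc n]"
      have len: "length ps = n - 1" using port_support[OF n ps] by simp
      have eqf: "(\<lambda>i. f (count (mset (ps @ [i])) j)) = (\<lambda>i. f c + (f (c+1) - f c) * indicator {j} i)"
        by (auto simp: c_def indicator_def)
      then have "measure_pmf.expectation (pmf_of_multiset M) (\<lambda>i. f (count (mset (ps @ [i])) j))
          = f c + (f (c+1) - f c) * measure_pmf.prob (pmf_of_multiset M) {j}" (is ?G)
      proof -
        have fin: "finite (set_pmf (pmf_of_multiset M))" using ne[of ps] by (simp add: M_def)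
        show ?G unfolding eqf
          by (simp add: integrable_measure_pmf_finite[OF fin] measure_pmf.prob_space)
      qed
      also have "measure_pmf.prob (pmf_of_multiset M) {j} = (real c + 1) / (2 * real n - 1)"
        using ne[of ps] j len n unfolding measure_pmf_single M_def
        by (simp add: c_def of_nat_diff)
      finally show "measure_pmf.expectation (pmf_of_multiset (mset ps + mset [1..<Suc n]))
        (\<lambda>i. f (count (mset (ps @ [i])) j)) = f (count (mset ps) j) +
            (f (count (mset ps) j + 1) - f (count (mset ps) j)) * (real (count (mset ps) j) + 1) / (2 * real n - 1)"
        by (simp add: M_def c_def)
    qed
  qed simp_all
  finally show ?thesis .
qed



lemma Gamma_plus1_pos: "(x::real) > 0 \<Longrightarrow> Gamma (x + 1) = x * Gamma x"
  by (rule Gamma_plus1) (auto elim!: nonpos_Ints_cases)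

definition e :: "nat \<Rightarrow> nat \<Rightarrow> real" where
  "e j n = Gamma (real n) * Gamma (real j - 1/2) / (Gamma (real j) * Gamma (real n - 1/2))"

lemma e_Suc: "n \<ge> 1 \<Longrightarrow> e j (Suc n) = e j n * (2 * real n) / (2 * real n - 1)"
proof -
  assume n: "n \<ge> 1"
  have a: "Gamma (real (Suc n)) = real n * Gamma (real n)"
    using Gamma_plus1_pos[of "real n"] n by (simp add: add.commute)
  have b: "Gamma (real (Suc n) - 1/2) = (real n - 1/2) * Gamma (real n - 1/2)"
    using Gamma_plus1_pos[of "real n - 1/2"] n by (simp add: algebra_simps)
  have "Gamma (real n - 1/2) > 0" using n by simp
  then show ?thesis unfolding e_def a b using n by (simp add: field_simps)
qed

lemma base_count: "1 \<le> j \<Longrightarrow> ps \<in> set_pmf (port j) \<Longrightarrow> count (mset ps) j = 0"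
  using port_support[of j ps] by (auto simp: count_eq_zero_iff)

lemma integrable_port: "integrable (measure_pmf (port n)) (f :: _ \<Rightarrow> real)"
  by (rule integrable_measure_pmf_finite[OF port_finite])

lemma E1:
  assumes "1 \<le> j" "j \<le> n"
  shows "measure_pmf.expectation (port n) (\<lambda>ps. real (count (mset ps) j) + 1) = e j n"
  using assms(2)
proof (induction n rule: dec_induct)
  case base
  have "measure_pmf.expectation (port j) (\<lambda>ps. real (count (mset ps) j) + 1) =
        measure_pmf.expectation (port j) (\<lambda>ps. 1)" (is "integral\<^sup>L _ ?L = integral\<^sup>L _ ?R")
    proof (rule integral_cong_AE)
    show "AE y in measure_pmf (port j). ?L y = ?R y"
    proof (rule AE_pmfI)
      fix y assume "y \<in> set_pmf (port j)"
      then have c0: "count (mset y) j = 0" by (rule base_count[OF assms(1)])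
      show "?L y = ?R y" unfolding c0 by simp
    qed
  qed simp_all
  also have "\<dots> = 1" by (simp add: measure_pmf.prob_space)
  moreover have "Gamma (real j) \<noteq> 0" "Gamma (real j - 1/2) \<noteq> 0"
  proof -
    have "real j > 0" "real j - 1/2 > 0" using assms(1) by auto
    from Gamma_real_pos[OF this(1)] Gamma_real_pos[OF this(2)]
    show "Gamma (real j) \<noteq> 0" "Gamma (real j - 1/2) \<noteq> 0" by auto
  qed
  ultimately show ?case
    using assms(1) by (simp add: e_def)
next
  case (step n)
  have n: "n \<ge> 1" using step assms by simp
  have "measure_pmf.expectation (port (Suc n)) (\<lambda>ps. real (count (mset ps) j) + 1) =
     measure_pmf.expectation (port n) (\<lambda>ps. (real (count (mset ps) j) + 1) +
            (real (count (mset ps) j) + 1) / (2 * real n - 1))"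
    using step_lemma[where f="\<lambda>c. real c + 1" and n=n and j=j] n assms step.hyps
    by (simp add: algebra_simps)
  also have "\<dots> = e j n + e j n / (2 * real n - 1)"
    by (simp add: integrable_port step.IH)
  also have "\<dots> = e j (Suc n)" using n by (simp add: e_Suc field_simps)
  finally show ?case .
qed

lemma E2:
  assumes "1 \<le> j" "j \<le> n"
  shows "measure_pmf.expectation (port n) (\<lambda>ps. (real (count (mset ps) j) + 1) * (real (count (mset ps) j) + 2))
     = 2 * (2 * real n - 1) / (2 * real j - 1)"
  using assms(2)
proof (induction n rule: dec_induct)
  case base
  have "measure_pmf.expectation (port j) (\<lambda>ps. (real (count (mset ps) j) + 1) * (real (count (mset ps) j) + 2)) =
        measure_pmf.expectation (port j) (\<lambda>ps. 2)" (is "integral\<^sup>L _ ?L = integral\<^sup>L _ ?R")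
    proof (rule integral_cong_AE)
    show "AE y in measure_pmf (port j). ?L y = ?R y"
    proof (rule AE_pmfI)
      fix y assume "y \<in> set_pmf (port j)"
      then have c0: "count (mset y) j = 0" by (rule base_count[OF assms(1)])
      show "?L y = ?R y" unfolding c0 by simp
    qed
  qed simp_all
  also have "\<dots> = 2" by (simp add: measure_pmf.prob_space)
  finally show ?case
    using assms(1) by (simp add: field_simps)
next
  case (step n)
  have n: "n \<ge> 1" using step assms by simp
  have "measure_pmf.expectation (port (Suc n)) (\<lambda>ps. (real (count (mset ps) j) + 1) * (real (count (mset ps) j) + 2)) =
     measure_pmf.expectation (port n) (\<lambda>ps. (real (count (mset ps) j) + 1) * (real (count (mset ps) j) + 2) +
            2 * ((real (count (mset ps) j) + 1) * (real (count (mset ps) j) + 2)) / (2 * real n - 1))"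
    using step_lemma[where f="\<lambda>c. (real c + 1) * (real c + 2)" and n=n and j=j] n assms step.hyps
    by (simp add: algebra_simps)
  also have "\<dots> = 2 * (2 * real n - 1) / (2 * real j - 1) + 2 * (2 * (2 * real n - 1) / (2 * real j - 1)) / (2 * real n - 1)"
    by (simp add: integrable_port step.IH)
  also have "\<dots> = 2 * (2 * real (Suc n) - 1) / (2 * real j - 1)"
  proof -
    have x: "2 * real n - 1 \<noteq> 0" using n by auto
    have "\<And>x B::real. x \<noteq> 0 \<Longrightarrow> 2 * x / B + 2 * (2 * x / B) / x = 2 * (x + 2) / B"
      by (simp add: field_simps add_divide_distrib)
    from this[OF x, of "2 * real j - 1"] show ?thesis by (simp add: algebra_simps)
  qed
  finally show ?case .
qed

lemma ED_eq:
  assumes "1 \<le> j" "j \<le> n"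
  shows "ED n j = e j n - (if j = 1 then 1 else 0)"
proof -
  have "(\<lambda>ps. real (deg ps j)) = (\<lambda>ps. (real (count (mset ps) j) + 1) - (if j = 1 then 1 else 0))"
    using assms(1) by (auto simp: deg_def children_def)
  then show ?thesis unfolding ED_def
    by (simp add: integrable_port E1[OF assms] measure_pmf.prob_space)
qed

lemma VarD_eq:
  assumes "1 \<le> j" "j \<le> n"
  shows "VarD n j = 2 * (2 * real n - 1) / (2 * real j - 1) - e j n - (e j n)\<^sup>2"
proof -
  define d :: real where "d = (if j = 1 then 1 else 0)"
  define W where "W = (\<lambda>ps. real (count (mset ps) j) + 1)"
  have eq: "\<And>ps. real (deg ps j) = W ps - d"
    using assms(1) by (auto simp: deg_def children_def W_def d_def)
  have EW: "measure_pmf.expectation (port n) W = e j n" using E1[OF assms] by (simp add: W_def)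
  have "measure_pmf.expectation (port n) (\<lambda>ps. W ps * (W ps + 1)) = 2 * (2 * real n - 1) / (2 * real j - 1)"
    using E2[OF assms] by (simp add: W_def algebra_simps)
  then have EW2: "measure_pmf.expectation (port n) (\<lambda>ps. (W ps)\<^sup>2) = 2 * (2 * real n - 1) / (2 * real j - 1) - e j n"
    using EW by (simp add: integrable_port algebra_simps power2_eq_square)
  have "VarD n j = measure_pmf.expectation (port n) (\<lambda>x. (W x - d)\<^sup>2) - (measure_pmf.expectation (port n) (\<lambda>x. W x - d))\<^sup>2"
    unfolding VarD_def eq by (rule measure_pmf.variance_eq) (simp_all add: integrable_port)
  also have "\<dots> = measure_pmf.expectation (port n) (\<lambda>x. (W x)\<^sup>2 - 2 * d * W x + d\<^sup>2) - (e j n - d)\<^sup>2"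
    by (simp add: integrable_port EW measure_pmf.prob_space power2_diff algebra_simps)
  also have "\<dots> = 2 * (2 * real n - 1) / (2 * real j - 1) - e j n - (e j n)\<^sup>2"
    by (simp add: integrable_port EW EW2 measure_pmf.prob_space power2_diff algebra_simps)
  finally show ?thesis .
qed



definition g :: "nat \<Rightarrow> real" where
  "g m = Gamma (real m) / (Gamma (real m - 1/2) * sqrt (real m))"

lemma g_pos: "m \<ge> 1 \<Longrightarrow> g m > 0"
  unfolding g_def by (intro divide_pos_pos mult_pos_pos Gamma_real_pos) auto

lemma g_lim: "g \<longlonglongrightarrow> 1"
proof -
  have G: "Gamma_series' (1/2 :: real) \<longlonglongrightarrow> Gamma (1/2)" by (rule Gamma_series'_LIMSEQ)
  have G12: "Gamma (1/2 :: real) > 0" by simp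
  have eq: "Gamma_series' (1/2 :: real) n / Gamma (1/2) = g n * (real n / (real n - 1/2))" if n: "n \<ge> 1" for n
  proof -
    have f: "fact (n - 1) = Gamma (real n)"
      using Gamma_fact[of "n - 1", where 'a=real] n by (simp add: of_nat_diff)
    have ex: "exp (ln (real n) / 2) = sqrt (real n)"
      using n by (simp add: powr_half_sqrt[symmetric] powr_def)
    have p: "pochhammer (1/2 :: real) n = Gamma (1/2 + real n) / Gamma (1/2)"
      by (rule pochhammer_Gamma) (auto elim!: nonpos_Ints_cases)
    have h: "Gamma (1/2 + real n) = (real n - 1/2) * Gamma (real n - 1/2)"
      using Gamma_plus1_pos[of "real n - 1/2"] n by (simp add: algebra_simps)
    have pos: "Gamma (real n - 1/2) > 0" "Gamma (real n) > 0" "sqrt (real n) > 0" "real n - 1/2 > 0"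
      using n by auto
    have "Gamma_series' (1/2 :: real) n / Gamma (1/2) = Gamma (real n) * sqrt (real n) / ((real n - 1/2) * Gamma (real n - 1/2))"
    proof -
      have gs: "Gamma_series' (1/2 :: real) n = Gamma (real n) * sqrt (real n) * Gamma (1/2) / ((real n - 1/2) * Gamma (real n - 1/2))"
        unfolding Gamma_series'_def f p h by (simp add: ex)
      have aux: "\<And>A s x B C :: real. C \<noteq> 0 \<Longrightarrow> A * s * C / (x * B) / C = A * s / (x * B)"
        by simp
      have "Gamma (1/2::real) \<noteq> 0" using G12 by linarith
      then show ?thesis unfolding gs by (rule aux)
    qed
    also have "\<dots> = g n * (real n / (real n - 1/2))"
    proof -
      have aux: "\<And>A s x B m :: real. s > 0 \<Longrightarrow> m = s * s \<Longrightarrow> A * s / (x * B) = A / (B * s) * (m / x)"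
        by (simp add: field_simps)
      show ?thesis unfolding g_def by (rule aux) (use pos in auto)
    qed
    finally show ?thesis .
  qed
  have "(\<lambda>n. Gamma_series' (1/2 :: real) n / Gamma (1/2)) \<longlonglongrightarrow> Gamma (1/2) / Gamma (1/2)"
    by (intro tendsto_divide G tendsto_const) (use G12 in linarith)
  moreover have "Gamma (1/2::real) / Gamma (1/2) = 1"
    by (rule divide_self) (use G12 in linarith)
  ultimately have L0: "(\<lambda>n. Gamma_series' (1/2 :: real) n / Gamma (1/2)) \<longlonglongrightarrow> 1" by simp
  have L1: "(\<lambda>n. g n * (real n / (real n - 1/2))) \<longlonglongrightarrow> 1"
    by (rule Lim_transform_eventually[OF L0]) (auto intro!: eventually_sequentiallyI[of 1] simp: eq)
  have L2: "(\<lambda>n. (real n - 1/2) / real n) \<longlonglongrightarrow> 1" by (rule lim_a)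
  have L3: "(\<lambda>n. g n * (real n / (real n - 1/2)) * ((real n - 1/2) / real n)) \<longlonglongrightarrow> 1"
    using tendsto_mult[OF L1 L2] by simp
  show ?thesis
  proof (rule Lim_transform_eventually[OF L3], rule eventually_sequentiallyI[of 1])
    fix x :: nat assume "1 \<le> x"
    then have "real x - 1/2 \<noteq> 0" "real x \<noteq> 0" by auto
    then show "g x * (real x / (real x - 1/2)) * ((real x - 1/2) / real x) = g x" by simp
  qed
qed



definition a :: "nat \<Rightarrow> real" where "a j = Gamma (real j - 1/2) / Gamma (real j)"

lemma a_pos: "j \<ge> 1 \<Longrightarrow> a j > 0"
  unfolding a_def by (intro divide_pos_pos Gamma_real_pos) auto

lemma e_pos: "j \<ge> 1 \<Longrightarrow> n \<ge> 1 \<Longrightarrow> e j n > 0"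
  unfolding e_def by (intro divide_pos_pos mult_pos_pos Gamma_real_pos) auto

lemma e_self: "j \<ge> 1 \<Longrightarrow> e j j = 1"
proof -
  assume j: "j \<ge> 1"
  have "Gamma (real j) > 0" "Gamma (real j - 1/2) > 0" using j by auto
  then show ?thesis unfolding e_def by simp
qed

lemma e_a: "j \<ge> 1 \<Longrightarrow> n \<ge> 1 \<Longrightarrow> e j n = a j * sqrt (real n) * g n"
proof -
  assume j: "j \<ge> 1" and n: "n \<ge> 1"
  have "Gamma (real j) > 0" "Gamma (real n - 1/2) > 0" "sqrt (real n) > 0" using j n by auto
  then show ?thesis unfolding e_def a_def g_def by (simp add: field_simps)
qed

lemma e_g: "j \<ge> 1 \<Longrightarrow> n \<ge> 1 \<Longrightarrow> e j n = g n / g j * sqrt (real n / real j)"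
proof -
  assume j: "j \<ge> 1" and n: "n \<ge> 1"
  have "Gamma (real j) > 0" "Gamma (real n - 1/2) > 0" "sqrt (real n) > 0"
       "Gamma (real n) > 0" "Gamma (real j - 1/2) > 0" "sqrt (real j) > 0" using j n by auto
  then show ?thesis unfolding e_def g_def by (simp add: field_simps real_sqrt_divide)
qed



lemma c_pos:
  assumes j: "j \<ge> 1"
  shows "(a j)\<^sup>2 < 4 / (2 * real j - 1)"
proof -
  define s where "s n = (e j n)\<^sup>2 / (real n - 1)" for n
  have dec: "s (Suc n) < s n" if n: "n \<ge> 2" for n
  proof -
    have ep: "e j n > 0" using e_pos[OF j, of n] n by simp
    have es: "e j (Suc n) = e j n * (2 * real n) / (2 * real n - 1)" using e_Suc[of n j] n by simp
    have pos: "real n - 1 > 0" "2 * real n - 1 > 0" "real n > 0" using n by auto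
    have aux: "\<And>E x :: real. x - 1 \<noteq> 0 \<Longrightarrow> 2*x-1 \<noteq> 0 \<Longrightarrow> x \<noteq> 0 \<Longrightarrow>
       (E * (2*x) / (2*x - 1))\<^sup>2 / (1 + x - 1) = E\<^sup>2/(x-1) * (4*x*(x-1)/(2*x-1)\<^sup>2)"
      by (simp add: divide_simps power2_eq_square)
    have "s (Suc n) = s n * (4 * real n * (real n - 1) / (2 * real n - 1)\<^sup>2)"
      unfolding s_def es of_nat_Suc by (rule aux) (use pos in auto)
    moreover have "4 * real n * (real n - 1) / (2 * real n - 1)\<^sup>2 < 1"
    proof -
      have "(2 * real n - 1)\<^sup>2 > 0" using pos by simp
      moreover have "4 * real n * (real n - 1) < (2 * real n - 1)\<^sup>2" by (simp add: power2_eq_square algebra_simps)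
      ultimately show ?thesis by (simp add: divide_less_eq_1_pos)
    qed
    moreover have "s n > 0" unfolding s_def using ep n by simp
    moreover have "\<And>S q :: real. S > 0 \<Longrightarrow> q < 1 \<Longrightarrow> S * q < S" by simp
    ultimately show ?thesis by metis
  qed
  have le: "s n \<le> s (j + 2)" if "n \<ge> j + 2" for n
    using that
  proof (induction n rule: dec_induct)
    case base then show ?case by simp
  next
    case (step n) then show ?case using dec[of n] by simp
  qed
  have lim: "s \<longlonglongrightarrow> (a j)\<^sup>2 * 1\<^sup>2 * 1"
  proof -
    have L: "(\<lambda>n. (a j)\<^sup>2 * (g n)\<^sup>2 * (real n / (real n - 1))) \<longlonglongrightarrow> (a j)\<^sup>2 * 1\<^sup>2 * 1"
      by (intro tendsto_mult tendsto_const tendsto_power g_lim lim_b)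
    show ?thesis
    proof (rule Lim_transform_eventually[OF L], rule eventually_sequentiallyI[of 2])
      fix n :: nat assume n: "2 \<le> n"
      have ea: "e j n = a j * sqrt (real n) * g n" using e_a[OF j, of n] n by simp
      show "(a j)\<^sup>2 * (g n)\<^sup>2 * (real n / (real n - 1)) = s n"
        unfolding s_def ea by (simp add: power_mult_distrib)
    qed
  qed
  have "(a j)\<^sup>2 \<le> s (j + 2)"
    using LIMSEQ_le_const2[OF lim, of "s (j+2)"] le by auto
  also have "\<dots> < s (j + 1)" using dec[of "j+1"] j by simp
  also have "s (j + 1) = 4 * real j / (2 * real j - 1)\<^sup>2"
  proof -
    have eq1: "e j (j + 1) = 2 * real j / (2 * real j - 1)"
      using e_Suc[of j j] e_self[OF j] j by simp
    have aux: "\<And>x::real. x \<ge> 1 \<Longrightarrow> (2 * x / (2 * x - 1))\<^sup>2 / (x + 1 - 1) = 4 * x / (2 * x - 1)\<^sup>2"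
      by (simp add: divide_simps power2_eq_square)
    show ?thesis unfolding s_def eq1 using aux[of "real j"] j by simp
  qed
  also have "\<dots> \<le> 4 / (2 * real j - 1)"
  proof -
    have aux: "\<And>x::real. x \<ge> 1 \<Longrightarrow> 2*x - 1 > 0 \<Longrightarrow> 4 * x / (2 * x - 1)\<^sup>2 \<le> 4 / (2 * x - 1)"
      by (simp add: divide_simps power2_eq_square mult_left_mono)
    show ?thesis using aux[of "real j"] j by simp
  qed
  finally show ?thesis .
qed



lemma filterlim_nat_of_real:
  fixes j :: "nat \<Rightarrow> nat"
  assumes "filterlim (\<lambda>n. real (j n)) at_top F"
  shows "filterlim j at_top F"
  unfolding filterlim_at_top
proof
  fix Z :: nat
  have "eventually (\<lambda>n. real Z \<le> real (j n)) F" using assms unfolding filterlim_at_top by blast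
  then show "eventually (\<lambda>n. Z \<le> j n) F" by (rule eventually_mono) simp
qed

lemma part1E:
  assumes j: "j \<ge> 1"
  shows "(\<lambda>n. ED n j) \<sim>[at_top] (\<lambda>n. Gamma (real j - 1/2) / Gamma (real j) * sqrt (real n))"
proof (rule asymp_equivI')
  define d :: real where "d = (if j = 1 then 1 else 0)"
  have ap: "a j > 0" using a_pos[OF j] .
  have L: "(\<lambda>n. g n - (d / a j) * inverse (sqrt (real n))) \<longlonglongrightarrow> 1 - (d / a j) * 0"
    by (intro tendsto_diff tendsto_mult g_lim tendsto_const inv_sqrt_lim)
  have L': "(\<lambda>n. g n - (d / a j) * inverse (sqrt (real n))) \<longlonglongrightarrow> 1" using L by simp
  show "(\<lambda>n. ED n j / (Gamma (real j - 1/2) / Gamma (real j) * sqrt (real n))) \<longlonglongrightarrow> 1"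
  proof (rule Lim_transform_eventually[OF L'], rule eventually_sequentiallyI[of j])
    fix n assume n: "j \<le> n"
    have ED: "ED n j = a j * sqrt (real n) * g n - d"
      using ED_eq[OF j n] e_a[OF j, of n] n j by (simp add: d_def)
    have sp: "sqrt (real n) > 0" using n j by simp
    show "g n - d / a j * inverse (sqrt (real n)) =
          ED n j / (Gamma (real j - 1/2) / Gamma (real j) * sqrt (real n))"
      unfolding ED a_def[symmetric] using ap sp by (simp add: field_simps)
  qed
qed

lemma part1V:
  assumes j: "j \<ge> 1"
  shows "(\<lambda>n. VarD n j) \<sim>[at_top]
           (\<lambda>n. (4 / (2 * real j - 1) - (Gamma (real j - 1/2))\<^sup>2 / (Gamma (real j))\<^sup>2) * real n)"
proof (rule asymp_equivI')
  define c where "c = 4 / (2 * real j - 1) - (a j)\<^sup>2"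
  have cp: "c > 0" using c_pos[OF j] by (simp add: c_def)
  have ceq: "4 / (2 * real j - 1) - (Gamma (real j - 1/2))\<^sup>2 / (Gamma (real j))\<^sup>2 = c"
    by (simp add: c_def a_def power_divide)
  have jp: "2 * real j - 1 > 0" using j by simp
  have L: "(\<lambda>n. (1/c) * (2 * (2 - inverse (real n)) / (2 * real j - 1) - a j * g n * inverse (sqrt (real n)) - (a j)\<^sup>2 * (g n)\<^sup>2))
      \<longlonglongrightarrow> (1/c) * (2 * (2 - 0) / (2 * real j - 1) - a j * 1 * 0 - (a j)\<^sup>2 * 1\<^sup>2)"
  proof -
    have I1: "(\<lambda>n. inverse (real n)) \<longlonglongrightarrow> 0" by (rule inv_nat_lim)
    have I2: "(\<lambda>n. inverse (sqrt (real n))) \<longlonglongrightarrow> 0" by (rule inv_sqrt_lim)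
    show ?thesis
      by (intro tendsto_mult tendsto_diff tendsto_divide tendsto_const tendsto_power g_lim I1 I2) (use jp in simp)
  qed
  have "(1/c) * (2 * (2 - 0) / (2 * real j - 1) - a j * 1 * 0 - (a j)\<^sup>2 * 1\<^sup>2) = 1"
    using cp by (simp add: c_def)
  note L = L[unfolded this]
  have aux: "\<And>s G A D C :: real. s > 0 \<Longrightarrow> C \<noteq> 0 \<Longrightarrow> D \<noteq> 0 \<Longrightarrow>
      (1/C) * (2 * (2 - inverse (s\<^sup>2)) / D - A * G * inverse s - A\<^sup>2 * G\<^sup>2) =
      (2 * (2 * s\<^sup>2 - 1) / D - A * s * G - (A * s * G)\<^sup>2) / (C * s\<^sup>2)"
    by (simp add: field_simps power2_eq_square)
  show "(\<lambda>n. VarD n j / ((4 / (2 * real j - 1) - (Gamma (real j - 1/2))\<^sup>2 / (Gamma (real j))\<^sup>2) * real n)) \<longlonglongrightarrow> 1"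
    unfolding ceq
  proof (rule Lim_transform_eventually[OF L], rule eventually_sequentiallyI[of j])
    fix n assume n: "j \<le> n"
    have V: "VarD n j = 2 * (2 * (sqrt (real n))\<^sup>2 - 1) / (2 * real j - 1) - a j * sqrt (real n) * g n - (a j * sqrt (real n) * g n)\<^sup>2"
      using VarD_eq[OF j n] e_a[OF j, of n] n j by simp
    have sp: "sqrt (real n) > 0" using n j by simp
    have "(1/c) * (2 * (2 - inverse ((sqrt (real n))\<^sup>2)) / (2 * real j - 1) - a j * g n * inverse (sqrt (real n)) - (a j)\<^sup>2 * (g n)\<^sup>2)
       = VarD n j / (c * (sqrt (real n))\<^sup>2)"
      unfolding V by (rule aux) (use sp cp jp in auto)
    then show "(1/c) * (2 * (2 - inverse (real n)) / (2 * real j - 1) - a j * g n * inverse (sqrt (real n)) - (a j)\<^sup>2 * (g n)\<^sup>2)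
       = VarD n j / (c * real n)" by simp
  qed
qed



lemma h_lim:
  assumes hj: "filterlim (j :: nat \<Rightarrow> nat) at_top at_top"
  shows "(\<lambda>n. g n / g (j n)) \<longlonglongrightarrow> 1"
proof -
  have "(\<lambda>n. g n / g (j n)) \<longlonglongrightarrow> 1 / 1"
    by (intro tendsto_divide g_lim filterlim_compose[OF g_lim hj]) simp
  then show ?thesis by simp
qed

lemma ev_j2:
  assumes hj: "filterlim (j :: nat \<Rightarrow> nat) at_top at_top"
  shows "eventually (\<lambda>n. 2 \<le> j n) at_top"
  using hj unfolding filterlim_at_top by blast

lemma part2:
  assumes jle: "\<forall>n. j n \<le> n" and hj: "filterlim j at_top at_top"
  shows "(\<lambda>n. ED n (j n)) \<sim>[at_top] (\<lambda>n. sqrt (real n / real (j n)))"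
proof (rule asymp_equivI')
  show "(\<lambda>n. ED n (j n) / sqrt (real n / real (j n))) \<longlonglongrightarrow> 1"
  proof (rule Lim_transform_eventually[OF h_lim[OF hj]])
    show "eventually (\<lambda>n. g n / g (j n) = ED n (j n) / sqrt (real n / real (j n))) at_top"
      using ev_j2[OF hj]
    proof eventually_elim
      case (elim n)
      have j1: "1 \<le> j n" "j n \<le> n" "j n \<noteq> 1" using elim jle by auto
      have "ED n (j n) = g n / g (j n) * sqrt (real n / real (j n))"
        using ED_eq[OF j1(1,2)] e_g[OF j1(1), of n] j1 by simp
      moreover have "sqrt (real n / real (j n)) > 0" using j1 by simp
      moreover have "n \<noteq> 0" "j n \<noteq> 0" using j1 by auto
      ultimately show ?case by simp
    qed
  qed
qed

lemma part3:
  assumes hj: "filterlim j at_top at_top" and ho: "(\<lambda>n. real (j n)) \<in> o(\<lambda>n. real n)"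
  shows "(\<lambda>n. VarD n (j n)) \<sim>[at_top] (\<lambda>n. real n / real (j n))"
proof (rule asymp_equivI')
  have r: "(\<lambda>n. real (j n) / real n) \<longlonglongrightarrow> 0" using smalloD_tendsto[OF ho] .
  have hR: "filterlim (\<lambda>n. real (j n)) at_top sequentially"
    by (rule filterlim_compose[OF filterlim_real_sequentially hj])
  have v: "(\<lambda>n. inverse (real (j n))) \<longlonglongrightarrow> 0" by (rule tendsto_inverse_0_at_top[OF hR])
  have u: "(\<lambda>n. inverse (real n)) \<longlonglongrightarrow> 0" by (rule inv_nat_lim)
  have L: "(\<lambda>n. 2 * (2 - inverse (real n)) / (2 - inverse (real (j n))) - g n / g (j n) * sqrt (real (j n) / real n) - (g n / g (j n))\<^sup>2)
     \<longlonglongrightarrow> 2 * (2 - 0) / (2 - 0) - 1 * sqrt 0 - 1\<^sup>2"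
    by (intro tendsto_diff tendsto_mult tendsto_divide tendsto_const tendsto_power tendsto_real_sqrt h_lim[OF hj] r u v) simp
  have L': "(\<lambda>n. 2 * (2 - inverse (real n)) / (2 - inverse (real (j n))) - g n / g (j n) * sqrt (real (j n) / real n) - (g n / g (j n))\<^sup>2)
     \<longlonglongrightarrow> 1" using L by simp
  have ev1: "eventually (\<lambda>n. real (j n) / real n < 1) at_top"
    using r by (rule order_tendstoD) simp
  have aux: "\<And>X Y h :: real. X > 0 \<Longrightarrow> Y > 0 \<Longrightarrow> 2 * Y\<^sup>2 - 1 > 0 \<Longrightarrow>
      2 * (2 - inverse (X\<^sup>2)) / (2 - inverse (Y\<^sup>2)) - h * (Y / X) - h\<^sup>2 =
      (2 * (2 * X\<^sup>2 - 1) / (2 * Y\<^sup>2 - 1) - h * (X / Y) - (h * (X / Y))\<^sup>2) / (X\<^sup>2 / Y\<^sup>2)"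
    by (simp add: field_simps power2_eq_square)
  show "(\<lambda>n. VarD n (j n) / (real n / real (j n))) \<longlonglongrightarrow> 1"
  proof (rule Lim_transform_eventually[OF L'])
    show "eventually (\<lambda>n. 2 * (2 - inverse (real n)) / (2 - inverse (real (j n))) - g n / g (j n) * sqrt (real (j n) / real n) - (g n / g (j n))\<^sup>2
        = VarD n (j n) / (real n / real (j n))) at_top"
      using ev_j2[OF hj] ev1 eventually_gt_at_top[of 0]
    proof eventually_elim
      case (elim n)
      have j1: "1 \<le> j n" "j n \<le> n" using elim by (auto simp: field_simps)
      define X where "X = sqrt (real n)"
      define Y where "Y = sqrt (real (j n))"
      have XY: "X > 0" "Y > 0" "X\<^sup>2 = real n" "Y\<^sup>2 = real (j n)" using j1 by (auto simp: X_def Y_def)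
      have y2: "2 * Y\<^sup>2 - 1 > 0" using XY j1 by simp
      have V: "VarD n (j n) = 2 * (2 * X\<^sup>2 - 1) / (2 * Y\<^sup>2 - 1) - g n / g (j n) * (X / Y) - (g n / g (j n) * (X / Y))\<^sup>2"
        using VarD_eq[OF j1] e_g[OF j1(1), of n] j1 XY by (simp add: X_def Y_def real_sqrt_divide)
      have "2 * (2 - inverse (X\<^sup>2)) / (2 - inverse (Y\<^sup>2)) - g n / g (j n) * (Y / X) - (g n / g (j n))\<^sup>2
          = VarD n (j n) / (X\<^sup>2 / Y\<^sup>2)"
        unfolding V by (rule aux) (use XY y2 in auto)
      then show ?case using XY by (simp add: X_def Y_def real_sqrt_divide)
    qed
  qed
qed



lemma part4:
  assumes th: "0 < \<theta>" "\<theta> < 1" and r: "((\<lambda>n. real (j n) / real n) \<longlongrightarrow> \<theta>) at_top"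
  shows "((\<lambda>n. VarD n (j n)) \<longlongrightarrow> 1 / \<theta> - 1 / sqrt \<theta>) at_top"
proof -
  have hR0: "filterlim (\<lambda>n. real (j n) / real n * real n) at_top sequentially"
    by (rule filterlim_tendsto_pos_mult_at_top[OF r th(1) filterlim_real_sequentially])
  have hR: "filterlim (\<lambda>n. real (j n)) at_top sequentially"
  proof (rule filterlim_cong[THEN iffD1, OF refl refl _ hR0])
    show "eventually (\<lambda>n. real (j n) / real n * real n = real (j n)) sequentially"
      using eventually_gt_at_top[of 0] by eventually_elim simp
  qed
  have hj: "filterlim j at_top at_top" by (rule filterlim_nat_of_real[OF hR])
  have u: "(\<lambda>n. inverse (real n)) \<longlonglongrightarrow> 0" by (rule inv_nat_lim)
  have sq: "sqrt \<theta> > 0" using th by simp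
  have L: "(\<lambda>n. 2 * (2 - inverse (real n)) / (2 * (real (j n) / real n) - inverse (real n))
        - g n / g (j n) * inverse (sqrt (real (j n) / real n)) - (g n / g (j n) * inverse (sqrt (real (j n) / real n)))\<^sup>2)
     \<longlonglongrightarrow> 2 * (2 - 0) / (2 * \<theta> - 0) - 1 * inverse (sqrt \<theta>) - (1 * inverse (sqrt \<theta>))\<^sup>2"
  proof -
    have A: "(\<lambda>n. 2 * (2 - inverse (real n)) / (2 * (real (j n) / real n) - inverse (real n))) \<longlonglongrightarrow> 2 * (2 - 0) / (2 * \<theta> - 0)"
      by (rule tendsto_divide, rule tendsto_mult[OF tendsto_const tendsto_diff[OF tendsto_const u]],
          rule tendsto_diff[OF tendsto_mult[OF tendsto_const r] u]) (use th in simp)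
    have B: "(\<lambda>n. g n / g (j n) * inverse (sqrt (real (j n) / real n))) \<longlonglongrightarrow> 1 * inverse (sqrt \<theta>)"
      by (rule tendsto_mult[OF h_lim[OF hj] tendsto_inverse[OF tendsto_real_sqrt[OF r]]]) (use sq in simp)
    show ?thesis by (intro tendsto_diff A B tendsto_power)
  qed
  have val: "2 * (2 - 0) / (2 * \<theta> - 0) - 1 * inverse (sqrt \<theta>) - (1 * inverse (sqrt \<theta>))\<^sup>2 = 1 / \<theta> - 1 / sqrt \<theta>"
    proof -
    have a1: "(1 / sqrt \<theta>)\<^sup>2 = 1 / \<theta>" using th by (simp add: power_divide inverse_eq_divide)
    have a2: "2 * (2 - 0) / (2 * \<theta> - 0) = 2 / \<theta>" by simp
    have a3: "1 * inverse (sqrt \<theta>) = 1 / sqrt \<theta>" by (simp add: inverse_eq_divide)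
    show ?thesis unfolding a2 a3 a1 by simp
  qed
  note L = L[unfolded val]
  have ev1: "eventually (\<lambda>n. real (j n) / real n < 1) at_top"
    using order_tendstoD(2)[OF r th(2)] .
  show ?thesis
  proof (rule Lim_transform_eventually[OF L])
    show "eventually (\<lambda>n. 2 * (2 - inverse (real n)) / (2 * (real (j n) / real n) - inverse (real n))
        - g n / g (j n) * inverse (sqrt (real (j n) / real n)) - (g n / g (j n) * inverse (sqrt (real (j n) / real n)))\<^sup>2
        = VarD n (j n)) at_top"
      using ev_j2[OF hj] ev1 eventually_gt_at_top[of 0]
    proof eventually_elim
      case (elim n)
      have j1: "1 \<le> j n" "j n \<le> n" using elim by (auto simp: field_simps)
      have V: "VarD n (j n) = 2 * (2 * real n - 1) / (2 * real (j n) - 1) - g n / g (j n) * sqrt (real n / real (j n))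
          - (g n / g (j n) * sqrt (real n / real (j n)))\<^sup>2"
        using VarD_eq[OF j1] e_g[OF j1(1), of n] j1 by simp
      have s: "inverse (sqrt (real (j n) / real n)) = sqrt (real n / real (j n))"
        by (metis inverse_divide real_sqrt_inverse)
      have np: "real n > 0" using elim by simp
      have f: "2 * (2 - inverse (real n)) / (2 * (real (j n) / real n) - inverse (real n)) = 2 * (2 * real n - 1) / (2 * real (j n) - 1)"
      proof -
        have aux: "\<And>x y :: real. x > 0 \<Longrightarrow> 2 * y - 1 > 0 \<Longrightarrow>
          2 * (2 - inverse x) / (2 * (y / x) - inverse x) = 2 * (2 * x - 1) / (2 * y - 1)"
          by (simp add: divide_simps)
        show ?thesis by (rule aux) (use np j1 in auto)
      qed
      show ?case unfolding V s f ..
    qed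
  qed
qed


theorem corollary3p2:
  shows
   "(\<forall>j::nat. j \<ge> 1 \<longrightarrow>
        (\<lambda>n. ED n j) \<sim>[at_top] (\<lambda>n. Gamma (real j - 1/2) / Gamma (real j) * sqrt (real n)) \<and>
        (\<lambda>n. VarD n j) \<sim>[at_top]
           (\<lambda>n. (4 / (2 * real j - 1) - (Gamma (real j - 1/2))\<^sup>2 / (Gamma (real j))\<^sup>2) * real n))
    \<and> (\<forall>j::nat \<Rightarrow> nat. (\<forall>n. j n \<le> n) \<and> filterlim j at_top at_top \<longrightarrow>
        (\<lambda>n. ED n (j n)) \<sim>[at_top] (\<lambda>n. sqrt (real n / real (j n))))
    \<and> (\<forall>j::nat \<Rightarrow> nat. filterlim j at_top at_top \<and> (\<lambda>n. real (j n)) \<in> o(\<lambda>n. real n) \<longrightarrow>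
        (\<lambda>n. VarD n (j n)) \<sim>[at_top] (\<lambda>n. real n / real (j n)))
    \<and> (\<forall>(j::nat \<Rightarrow> nat) (\<theta>::real). 0 < \<theta> \<and> \<theta> < 1 \<and>
          ((\<lambda>n. real (j n) / real n) \<longlongrightarrow> \<theta>) at_top \<longrightarrow>
        ((\<lambda>n. VarD n (j n)) \<longlongrightarrow> 1 / \<theta> - 1 / sqrt \<theta>) at_top)"
proof (intro conjI allI impI)
  fix j :: nat assume "j \<ge> 1"
  then show "(\<lambda>n. ED n j) \<sim>[at_top] (\<lambda>n. Gamma (real j - 1/2) / Gamma (real j) * sqrt (real n))"
    by (rule part1E)
next
  fix j :: nat assume "j \<ge> 1"
  then show "(\<lambda>n. VarD n j) \<sim>[at_top]
           (\<lambda>n. (4 / (2 * real j - 1) - (Gamma (real j - 1/2))\<^sup>2 / (Gamma (real j))\<^sup>2) * real n)"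
    by (rule part1V)
next
  fix j :: "nat \<Rightarrow> nat" assume "(\<forall>n. j n \<le> n) \<and> filterlim j at_top at_top"
  then show "(\<lambda>n. ED n (j n)) \<sim>[at_top] (\<lambda>n. sqrt (real n / real (j n)))"
    using part2 by blast
next
  fix j :: "nat \<Rightarrow> nat" assume "filterlim j at_top at_top \<and> (\<lambda>n. real (j n)) \<in> o(\<lambda>n. real n)"
  then show "(\<lambda>n. VarD n (j n)) \<sim>[at_top] (\<lambda>n. real n / real (j n))"
    using part3 by blast
next
  fix j :: "nat \<Rightarrow> nat" and \<theta> :: real
  assume "0 < \<theta> \<and> \<theta> < 1 \<and> ((\<lambda>n. real (j n) / real n) \<longlongrightarrow> \<theta>) at_top"
  then show "((\<lambda>n. VarD n (j n)) \<longlongrightarrow> 1 / \<theta> - 1 / sqrt \<theta>) at_top"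
    using part4 by blast
qed

end
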